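(* Suppose Assumptions 1 and 2 hold, and let $\rho > \mathcal{D}_{Z_\star} := \max_{(y^\star,Z^\star)\in\mathcal{D}^\star}\operatorname{tr}(Z^\star)$. Then a matrix $\hat X\in\mathbb{S}^n$ is an optimal solution of the primal SDP (P) if and only if it is an optimal solution of the penalized problem $$\min_{X\in\mathbb{S}^n}\ \langle C,X\rangle+\rho\max\{\lambda_{\max}(-X),0\}\quad\text{subject to}\quad \langle A_i,X\rangle=b_i,\ i=1,\dots,m.$$
   Context: Data: $b\in\mathbb{R}^m$ and $C,A_1,\dots,A_m\in\mathbb{S}^n$ (real symmetric $n\times n$ matrices), with the trace inner product $\langle X,Y\rangle=\operatorname{tr}(XY)$. Define $\mathcal{A}:\mathbb{S}^n\to\mathbb{R}^m$, $\mathcal{A}(X)=(\langle A_1,X\rangle,\dots,\langle A_m,X\rangle)^\top$, with adjoint $\mathcal{A}^*(y)=\sum_{i=1}^m y_iA_i$. The primal SDP (P) is $\min_X\langle C,X\rangle$ s.t. $\mathcal{A}(X)=b$, $X\succeq 0$; the dual SDP (D) is $\max_{y,Z} b^\top y$ s.t. $Z+\mathcal{A}^*(y)=C$, $Z\succeq0$. $\mathcal{P}^\star$ is the set of optimal solutions of (P) and $\mathcal{D}^\star$ the set of optimal pairs $(y,Z)$ of (D). Assumption 1: $A_1,\dots,A_m$ are linearly independent. Assumption 2: (P) and (D) are both strictly feasible (there is a feasible $X\succ0$ for (P) and a feasible $(y,Z)$ with $Z\succ0$ for (D)). Under these assumptions $\mathcal{D}^\star$ is nonempty and compact, so the maximum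 defining $\mathcal{D}_{Z_\star}$ exists. $\lambda_{\max}$ denotes the largest eigenvalue. *)

theory Defs
  imports "HOL-Analysis.Analysis"
begin

type_synonym 'n smat = "real^'n^'n"

definition symm :: "'n::finite smat \<Rightarrow> bool" where
  "symm X \<longleftrightarrow> transpose X = X"

definition tinner :: "'n::finite smat \<Rightarrow> 'n smat \<Rightarrow> real" where
  "tinner X Y = trace (X ** Y)"

definition psd :: "'n::finite smat \<Rightarrow> bool" where
  "psd X \<longleftrightarrow> (\<forall>v. 0 \<le> v \<bullet> (X *v v))"

definition pd :: "'n::finite smat \<Rightarrow> bool" where
  "pd X \<longleftrightarrow> (\<forall>v. v \<noteq> 0 \<longrightarrow> 0 < v \<bullet> (X *v v))"

definition lambda_max :: "'n::finite smat \<Rightarrow> real" where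
  "lambda_max X = Max {l. \<exists>v. v \<noteq> 0 \<and> X *v v = l *\<^sub>R v}"

definition opA :: "('m::finite \<Rightarrow> 'n::finite smat) \<Rightarrow> 'n smat \<Rightarrow> real^'m" where
  "opA A X = (\<chi> i. tinner (A i) X)"

definition adjA :: "('m::finite \<Rightarrow> 'n::finite smat) \<Rightarrow> real^'m \<Rightarrow> 'n smat" where
  "adjA A y = (\<Sum>i\<in>UNIV. (y $ i) *\<^sub>R A i)"

definition primal_feasible where
  "primal_feasible A b X \<longleftrightarrow> symm X \<and> opA A X = b \<and> psd X"

definition primal_opt where
  "primal_opt C A b = {X. primal_feasible A b X \<and>
      (\<forall>X'. primal_feasible A b X' \<longrightarrow> tinner C X \<le> tinner C X')}"

definition dual_feasible where
  "dual_feasible C A y Z \<longleftrightarrow> symm Z \<and> Z + adjA A y = C \<and> psd Z"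

definition dual_opt where
  "dual_opt C A b = {(y, Z). dual_feasible C A y Z \<and>
      (\<forall>y' Z'. dual_feasible C A y' Z' \<longrightarrow> b \<bullet> y' \<le> b \<bullet> y)}"

definition DZstar where
  "DZstar C A b = Sup ((\<lambda>(y, Z). trace Z) ` dual_opt C A b)"

definition penalty_obj where
  "penalty_obj C \<rho> X = tinner C X + \<rho> * max (lambda_max (- X)) 0"

definition penalized_opt where
  "penalized_opt C A b \<rho> = {X. symm X \<and> opA A X = b \<and>
      (\<forall>X'. symm X' \<and> opA A X' = b \<longrightarrow> penalty_obj C \<rho> X \<le> penalty_obj C \<rho> X')}"

end

theory Submission
  imports Defs
begin


lemma tinner_expand: "tinner X Y = (\<Sum>i\<in>UNIV. \<Sum>j\<in>UNIV. X$i$j * Y$j$i)"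
  by (simp add: tinner_def trace_def matrix_matrix_mult_def)

lemma tinner_comm: "tinner X Y = tinner Y X"
  unfolding tinner_def by (rule trace_mul_sym)

lemma tinner_add_right: "tinner X (Y + W) = tinner X Y + tinner X W"
  by (simp add: tinner_expand algebra_simps sum.distrib)

lemma tinner_scale_right: "tinner X (c *\<^sub>R Y) = c * tinner X Y"
  by (simp add: tinner_expand sum_distrib_left mult.left_commute)

lemma tinner_sum_right: "tinner X (\<Sum>k\<in>K. Y k) = (\<Sum>k\<in>K. tinner X (Y k))"
proof (induction K rule: infinite_finite_induct)
  case (empty) show ?case by (simp add: tinner_expand)
next
  case (infinite K) then show ?case by (simp add: tinner_expand)
next
  case (insert x F) then show ?case by (simp add: tinner_add_right)
qed

lemma tinner_add_left: "tinner (Y + W) X = tinner Y X + tinner W X"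
  by (metis tinner_comm tinner_add_right)
lemma tinner_scale_left: "tinner (c *\<^sub>R Y) X = c * tinner Y X"
  by (metis tinner_comm tinner_scale_right)
lemma tinner_sum_left: "tinner (\<Sum>k\<in>K. Y k) X = (\<Sum>k\<in>K. tinner (Y k) X)"
  by (metis (no_types, lifting) sum.cong tinner_comm tinner_sum_right)
lemma tinner_diff_left: "tinner (Y - W) X = tinner Y X - tinner W X"
  by (simp add: tinner_expand algebra_simps sum_subtractf)
lemma tinner_neg_left: "tinner (- Y) X = - tinner Y X"
  by (simp add: tinner_expand sum_negf)
lemma tinner_mat1: "tinner Z (mat 1) = trace Z"
  by (simp add: tinner_def)

definition outer :: "real^'n \<Rightarrow> real^'n \<Rightarrow> real^'n^'n" where
  "outer u v = (\<chi> i j. u$i * v$j)"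

lemma outer_mult: "outer u u *v v = (u \<bullet> v) *\<^sub>R u"
  by (simp add: outer_def matrix_vector_mult_def inner_vec_def vec_eq_iff sum_distrib_left sum_distrib_right mult.assoc mult.commute mult.left_commute)

lemma tinner_outer: "tinner Z (outer v v) = v \<bullet> (Z *v v)"
  by (simp add: tinner_expand outer_def matrix_vector_mult_def inner_vec_def sum_distrib_left
      mult.commute mult.left_commute)

lemma symm_outer: "symm (outer v v)"
  by (simp add: symm_def outer_def transpose_def vec_eq_iff mult.commute)

lemma psd_outer: "psd (outer v v)"
  unfolding psd_def by (simp add: outer_mult inner_commute)

lemma symm_inner: "symm M \<Longrightarrow> x \<bullet> (M *v y) = (M *v x) \<bullet> y"
  by (metis dot_lmul_matrix inner_commute symm_def vector_transpose_matrix)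

lemma opA_inner: "a \<bullet> opA A X = tinner (adjA A a) X"
  by (simp add: opA_def adjA_def inner_vec_def tinner_sum_left tinner_scale_left)

lemma symm_add: "symm X \<Longrightarrow> symm Y \<Longrightarrow> symm (X + Y)"
  by (simp add: symm_def transpose_def vec_eq_iff)
lemma symm_diff: "symm X \<Longrightarrow> symm Y \<Longrightarrow> symm (X - Y)"
  by (simp add: symm_def transpose_def vec_eq_iff)
lemma symm_scale: "symm X \<Longrightarrow> symm (c *\<^sub>R X)"
  by (simp add: symm_def transpose_def vec_eq_iff)
lemma symm_neg: "symm X \<Longrightarrow> symm (- X)"
  by (simp add: symm_def transpose_def vec_eq_iff)
lemma symm_sum: "(\<And>k. k \<in> K \<Longrightarrow> symm (Y k)) \<Longrightarrow> symm (\<Sum>k\<in>K. Y k)"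
  by (induction K rule: infinite_finite_induct) (auto simp: symm_add symm_def transpose_def vec_eq_iff)
lemma symm_mat: "symm (mat c)"
  by (simp add: symm_def transpose_def vec_eq_iff mat_def)
lemma symm_adjA: "(\<And>i. symm (A i)) \<Longrightarrow> symm (adjA A y)"
  unfolding adjA_def by (intro symm_sum symm_scale) auto



definition oeig :: "real^'n^'n \<Rightarrow> (real^'n) set \<Rightarrow> bool" where
  "oeig M B \<longleftrightarrow> finite B \<and> (\<forall>b\<in>B. norm b = 1) \<and> pairwise orthogonal B \<and>
     (\<forall>b\<in>B. M *v b = (b \<bullet> (M *v b)) *\<^sub>R b)"

lemma orth_sum_coeff:
  assumes fin: "finite B" and nb: "\<forall>b\<in>B. norm b = 1" and po: "pairwise orthogonal B" and cB: "c \<in> B"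
  shows "c \<bullet> (\<Sum>b\<in>B. f b *\<^sub>R b) = f c"
proof -
  have "c \<bullet> (\<Sum>b\<in>B. f b *\<^sub>R b) = (\<Sum>b\<in>B. f b * (c \<bullet> b))"
    by (simp add: inner_sum_right)
  also have "\<dots> = f c * (c \<bullet> c) + (\<Sum>b\<in>B-{c}. f b * (c \<bullet> b))"
    by (rule sum.remove[OF fin cB])
  also have "(\<Sum>b\<in>B-{c}. f b * (c \<bullet> b)) = 0"
  proof (rule sum.neutral, rule ballI)
    fix b assume "b \<in> B - {c}"
    hence "orthogonal c b" using pairwiseD[OF po cB] by auto
    thus "f b * (c \<bullet> b) = 0" by (simp add: orthogonal_def)
  qed
  also have "c \<bullet> c = 1"
  proof -
    have "c \<bullet> c = (norm c)^2" by (simp add: power2_norm_eq_inner)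
    thus ?thesis using nb cB by simp
  qed
  finally show ?thesis by simp
qed

lemma real_quad_lemma:
  fixes a c :: real
  assumes "\<And>t. 2*t*a + t^2*c \<le> 0"
  shows "a = 0"
proof (rule ccontr)
  assume "a \<noteq> 0"
  define s where "s = 1 / (\<bar>c\<bar> + 1)"
  have s: "s > 0" "s * \<bar>c\<bar> < 1" unfolding s_def by (auto simp: field_simps)
  have "2*(s*a)*a + (s*a)^2*c \<le> 0" by (rule assms)
  hence h1: "(s*a^2) * (2 + s*c) \<le> 0" by (simp add: power2_eq_square algebra_simps)
  have h2: "s*a^2 > 0" using s \<open>a \<noteq> 0\<close> by simp
  have "\<bar>s*c\<bar> < 1" using s by (simp add: abs_mult)
  hence h3: "2 + s*c > 0" using abs_less_iff[of "s*c" 1] by linarith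
  have "(s*a^2) * (2 + s*c) > 0" using h2 h3 by (rule mult_pos_pos)
  with h1 show False by linarith
qed

lemma oeig_extend:
  fixes M :: "real^'n^'n"
  assumes symM: "symm M" and B: "oeig M B" and sp: "span B \<noteq> UNIV"
  shows "\<exists>u. u \<notin> B \<and> oeig M (insert u B)"
proof -
  define W where "W = (\<Inter>b\<in>B. {w. b \<bullet> w = 0})"
  have W_iff: "w \<in> W \<longleftrightarrow> (\<forall>b\<in>B. b \<bullet> w = 0)" for w unfolding W_def by auto
  have W_add: "v \<in> W \<Longrightarrow> w \<in> W \<Longrightarrow> v + t *\<^sub>R w \<in> W" for v w t
    by (auto simp: W_iff inner_add_right)
  have W_scale: "v \<in> W \<Longrightarrow> t *\<^sub>R v \<in> W" for v t
    by (auto simp: W_iff)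
  have "span B \<subset> span UNIV" using sp by auto
  then obtain x where x: "x \<noteq> 0" "x \<in> span UNIV" "\<And>y. y \<in> span B \<Longrightarrow> orthogonal x y"
    by (rule orthogonal_to_subspace_exists_gen) auto
  have xW: "x \<in> W" unfolding W_iff
  proof
    fix b assume "b \<in> B"
    hence "orthogonal x b" using x(3) span_base by blast
    thus "b \<bullet> x = 0" by (metis orthogonal_def inner_commute)
  qed
  define S where "S = W \<inter> sphere 0 1"
  have "closed W" unfolding W_def by (intro closed_INT) (auto intro: closed_hyperplane)
  hence cS: "compact S" unfolding S_def by (metis compact_Int_closed compact_sphere inf_commute)
  have "x /\<^sub>R norm x \<in> W" using xW W_scale by blast
  hence "x /\<^sub>R norm x \<in> S" using x(1) by (simp add: S_def)
  hence neS: "S \<noteq> {}" by auto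
  have "continuous_on S (\<lambda>w. w \<bullet> (M *v w))" by (intro continuous_intros)
  then obtain u where uS: "u \<in> S" and umax: "\<And>w. w \<in> S \<Longrightarrow> w \<bullet> (M *v w) \<le> u \<bullet> (M *v u)"
    using continuous_attains_sup[OF cS neS] by blast
  define \<mu> where "\<mu> = u \<bullet> (M *v u)"
  have uW: "u \<in> W" and nu: "norm u = 1" using uS by (auto simp: S_def)
  have uu: "u \<bullet> u = 1"
  proof -
    have "u \<bullet> u = (norm u)^2" by (simp add: power2_norm_eq_inner)
    thus ?thesis using nu by simp
  qed
  have ray: "v \<bullet> (M *v v) \<le> \<mu> * (v \<bullet> v)" if "v \<in> W" for v
  proof (cases "v = 0")
    case True then show ?thesis by simp
  next
    case False
    have "v /\<^sub>R norm v \<in> S" using False that W_scale by (auto simp: S_def)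
    hence "(v /\<^sub>R norm v) \<bullet> (M *v (v /\<^sub>R norm v)) \<le> \<mu>" using umax \<mu>_def by blast
    hence "(v \<bullet> (M *v v)) / (norm v)^2 \<le> \<mu>"
      by (simp add: matrix_vector_mult_scaleR power2_eq_square divide_inverse mult.assoc mult.commute mult.left_commute)
    moreover have "(norm v)^2 = v \<bullet> v" by (simp add: power2_norm_eq_inner)
    moreover have "norm v > 0" using False by simp
    ultimately show ?thesis by (simp add: divide_le_eq mult.commute)
  qed
  have orthg: "w \<bullet> (M *v u - \<mu> *\<^sub>R u) = 0" if wW: "w \<in> W" for w
  proof -
    have uw: "u \<bullet> (M *v w) = w \<bullet> (M *v u)" by (metis symm_inner[OF symM] inner_commute)
    have wu: "u \<bullet> w = w \<bullet> u" by (rule inner_commute)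
    have "2*t*(w \<bullet> (M *v u - \<mu> *\<^sub>R u)) + t^2*(w \<bullet> (M *v w) - \<mu> * (w \<bullet> w)) \<le> 0" for t
    proof -
      have r: "(u + t *\<^sub>R w) \<bullet> (M *v (u + t *\<^sub>R w)) \<le> \<mu> * ((u + t *\<^sub>R w) \<bullet> (u + t *\<^sub>R w))"
        using ray W_add uW wW by blast
      have e1: "(u + t *\<^sub>R w) \<bullet> (M *v (u + t *\<^sub>R w)) = u \<bullet> (M *v u) + t*(u \<bullet> (M *v w)) + t*(w \<bullet> (M *v u)) + t*t*(w \<bullet> (M *v w))"
        by (simp add: matrix_vector_right_distrib matrix_vector_mult_scaleR inner_add_left inner_add_right distrib_left)
      have e2: "(u + t *\<^sub>R w) \<bullet> (u + t *\<^sub>R w) = u \<bullet> u + t*(u \<bullet> w) + t*(w \<bullet> u) + t*t*(w \<bullet> w)"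
        by (simp add: inner_add_left inner_add_right distrib_left)
      have e3: "w \<bullet> (M *v u - \<mu> *\<^sub>R u) = w \<bullet> (M *v u) - \<mu> * (w \<bullet> u)"
        by (simp add: inner_diff_right)
      show ?thesis using r unfolding e1 e2 e3 uw wu uu \<mu>_def[symmetric]
        by (simp add: power2_eq_square algebra_simps)
    qed
    thus ?thesis by (rule real_quad_lemma)
  qed
  define g where "g = M *v u - \<mu> *\<^sub>R u"
  have "g \<in> W" unfolding W_iff
  proof
    fix b assume bB: "b \<in> B"
    have bu: "b \<bullet> u = 0" using uW bB W_iff by auto
    have e: "b \<bullet> (M *v u) = (M *v b) \<bullet> u" by (rule symm_inner[OF symM])
    have "M *v b = (b \<bullet> (M *v b)) *\<^sub>R b" using B bB by (auto simp: oeig_def)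
    hence "(M *v b) \<bullet> u = (b \<bullet> (M *v b)) * (b \<bullet> u)" by (metis inner_scaleR_left)
    hence "b \<bullet> (M *v u) = 0" using e bu by simp
    thus "b \<bullet> g = 0" unfolding g_def using bu by (simp add: inner_diff_right)
  qed
  hence "g \<bullet> g = 0" using orthg g_def by blast
  hence eig: "M *v u = \<mu> *\<^sub>R u" unfolding g_def by simp
  have uB: "u \<notin> B" using uW uu W_iff by force
  have "pairwise orthogonal (insert u B)"
    unfolding pairwise_insert
  proof
    show "\<forall>y. y \<in> B \<and> y \<noteq> u \<longrightarrow> orthogonal u y \<and> orthogonal y u"
      using uW unfolding W_iff orthogonal_def by (metis inner_commute)
    show "pairwise orthogonal B" using B by (simp add: oeig_def)
  qed
  hence "oeig M (insert u B)"
    using B nu eig unfolding oeig_def \<mu>_def by simp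
  thus ?thesis using uB by blast
qed

lemma oeig_card: "oeig M B \<Longrightarrow> card B \<le> CARD('n)" for M :: "real^'n^'n"
proof -
  assume B: "oeig M B"
  have nb: "\<forall>b\<in>B. norm b = 1" and po: "pairwise orthogonal B" using B by (simp_all add: oeig_def)
  have z: "0 \<notin> B"
  proof
    assume "0 \<in> B"
    hence "norm (0::real^'n) = 1" using nb by (rule bspec[rotated])
    thus False by simp
  qed
  have "independent B" by (rule pairwise_orthogonal_independent[OF po z])
  hence "card B \<le> DIM(real^'n)" by (rule independent_bound[THEN conjunct2])
  thus ?thesis by simp
qed

lemma spectral_span:
  fixes M :: "real^'n^'n"
  assumes "symm M"
  shows "\<exists>B. oeig M B \<and> span B = UNIV"
proof -
  have e1: "oeig M {}" by (simp add: oeig_def)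
  have e2: "\<forall>B. oeig M B \<longrightarrow> card B < CARD('n) + 1"
  proof (intro allI impI)
    fix B assume "oeig M B" thus "card B < CARD('n) + 1" using oeig_card[of M B] by linarith
  qed
  from ex_has_greatest_nat[OF e1 e2] obtain B where B: "oeig M B"
    and mx: "\<forall>B'. oeig M B' \<longrightarrow> card B' \<le> card B" by (elim exE conjE)
  show ?thesis
  proof (rule ccontr)
    assume "\<not> ?thesis"
    hence sp: "span B \<noteq> UNIV" using B by auto
    from oeig_extend[OF assms B sp] obtain u where u: "u \<notin> B" "oeig M (insert u B)" by (elim exE conjE)
    have "finite B" using B by (simp add: oeig_def)
    hence "card (insert u B) = Suc (card B)" using u(1) by simp
    moreover have "card (insert u B) \<le> card B" using mx u(2) by simp
    ultimately show False by simp
  qed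
qed

definition onb where
  "onb M B \<longleftrightarrow> oeig M B \<and> (\<forall>v. v = (\<Sum>b\<in>B. (b \<bullet> v) *\<^sub>R b))"

lemma spectral:
  fixes M :: "real^'n^'n"
  assumes "symm M"
  shows "\<exists>B. onb M B"
proof -
  from spectral_span[OF assms] obtain B where B: "oeig M B" and sp: "span B = UNIV" by (elim exE conjE)
  have fin: "finite B" and nb: "\<forall>b\<in>B. norm b = 1" and po: "pairwise orthogonal B"
    using B by (simp_all add: oeig_def)
  have "v = (\<Sum>b\<in>B. (b \<bullet> v) *\<^sub>R b)" for v
  proof -
    define r where "r = v - (\<Sum>b\<in>B. (b \<bullet> v) *\<^sub>R b)"
    have orth: "orthogonal r c" if cB: "c \<in> B" for c
    proof -
      have "c \<bullet> (\<Sum>b\<in>B. (b \<bullet> v) *\<^sub>R b) = c \<bullet> v"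
        by (rule orth_sum_coeff[OF fin nb po cB])
      hence "c \<bullet> r = 0" by (simp add: r_def inner_diff_right)
      thus ?thesis by (metis orthogonal_def inner_commute)
    qed
    have rs: "r \<in> span B" using sp by simp
    have "orthogonal r r" by (rule orthogonal_to_span[OF rs orth])
    hence "r = 0" by (simp only: orthogonal_self)
    hence "v - (\<Sum>b\<in>B. (b \<bullet> v) *\<^sub>R b) = 0" unfolding r_def .
    thus ?thesis by (simp only: right_minus_eq)
  qed
  hence "onb M B" using B by (simp add: onb_def)
  thus ?thesis by blast
qed



lemma mv_sum_right: "M *v (\<Sum>k\<in>K. f k) = (\<Sum>k\<in>K. M *v f k)" for M :: "real^'n^'m"
proof (induction K rule: infinite_finite_induct)
  case (infinite K) thus ?case by simp
next
  case empty thus ?case by simp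
next
  case (insert x F) thus ?case by (simp add: matrix_vector_right_distrib)
qed

lemma mv_sum_left: "(\<Sum>k\<in>K. A k) *v x = (\<Sum>k\<in>K. A k *v x)" for x :: "real^'n"
proof (induction K rule: infinite_finite_induct)
  case (infinite K) thus ?case by simp
next
  case empty thus ?case by simp
next
  case (insert y F) thus ?case by (simp add: matrix_vector_mult_add_rdistrib)
qed

lemma onb_parts:
  assumes "onb M B"
  shows "finite B" "\<forall>b\<in>B. norm b = 1" "pairwise orthogonal B"
    "\<And>b. b \<in> B \<Longrightarrow> M *v b = (b \<bullet> (M *v b)) *\<^sub>R b" "\<And>v. v = (\<Sum>b\<in>B. (b \<bullet> v) *\<^sub>R b)"
proof -
  have o: "oeig M B" and r: "\<forall>v. v = (\<Sum>b\<in>B. (b \<bullet> v) *\<^sub>R b)"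
    using assms unfolding onb_def by (rule conjunct1, rule conjunct2)
  have o': "finite B \<and> (\<forall>b\<in>B. norm b = 1) \<and> pairwise orthogonal B \<and>
     (\<forall>b\<in>B. M *v b = (b \<bullet> (M *v b)) *\<^sub>R b)" using o unfolding oeig_def .
  show "finite B" using o' by (rule conjunct1)
  show "\<forall>b\<in>B. norm b = 1" using o' by (elim conjE)
  show "pairwise orthogonal B" using o' by (elim conjE)
  show "\<And>b. b \<in> B \<Longrightarrow> M *v b = (b \<bullet> (M *v b)) *\<^sub>R b"
  proof -
    fix b assume "b \<in> B"
    moreover have "\<forall>b\<in>B. M *v b = (b \<bullet> (M *v b)) *\<^sub>R b" using o' by (elim conjE)
    ultimately show "M *v b = (b \<bullet> (M *v b)) *\<^sub>R b" by (rule bspec[rotated])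
  qed
  show "\<And>v. v = (\<Sum>b\<in>B. (b \<bullet> v) *\<^sub>R b)" using r by (rule spec)
qed

lemma onb_mult:
  assumes "onb M B"
  shows "M *v v = (\<Sum>b\<in>B. ((b \<bullet> (M *v b)) * (b \<bullet> v)) *\<^sub>R b)"
proof -
  have "M *v v = M *v (\<Sum>b\<in>B. (b \<bullet> v) *\<^sub>R b)" using onb_parts(5)[OF assms, of v] by (rule arg_cong)
  also have "\<dots> = (\<Sum>b\<in>B. (b \<bullet> v) *\<^sub>R (M *v b))" by (simp add: mv_sum_right matrix_vector_mult_scaleR)
  also have "\<dots> = (\<Sum>b\<in>B. ((b \<bullet> (M *v b)) * (b \<bullet> v)) *\<^sub>R b)"
  proof (rule sum.cong[OF refl])
    fix b assume "b \<in> B"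
    hence "M *v b = (b \<bullet> (M *v b)) *\<^sub>R b" by (rule onb_parts(4)[OF assms])
    thus "(b \<bullet> v) *\<^sub>R (M *v b) = ((b \<bullet> (M *v b)) * (b \<bullet> v)) *\<^sub>R b"
      by (metis scaleR_scaleR mult.commute)
  qed
  finally show ?thesis .
qed

lemma onb_decomp:
  assumes "onb M B"
  shows "M = (\<Sum>b\<in>B. (b \<bullet> (M *v b)) *\<^sub>R outer b b)"
  unfolding matrix_eq
proof
  fix x
  have "(\<Sum>b\<in>B. (b \<bullet> (M *v b)) *\<^sub>R outer b b) *v x = (\<Sum>b\<in>B. ((b \<bullet> (M *v b)) * (b \<bullet> x)) *\<^sub>R b)"
    by (simp add: mv_sum_left scaleR_matrix_vector_assoc[symmetric] outer_mult)
  thus "M *v x = (\<Sum>b\<in>B. (b \<bullet> (M *v b)) *\<^sub>R outer b b) *v x"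
    using onb_mult[OF assms, of x] by (rule trans[OF _ sym, rotated])
qed

lemma onb_id:
  assumes "onb M B"
  shows "mat 1 = (\<Sum>b\<in>B. outer b b)"
  unfolding matrix_eq
proof
  fix x
  have "(\<Sum>b\<in>B. outer b b) *v x = (\<Sum>b\<in>B. (b \<bullet> x) *\<^sub>R b)"
    by (simp add: mv_sum_left outer_mult)
  thus "mat 1 *v x = (\<Sum>b\<in>B. outer b b) *v x"
    using onb_parts(5)[OF assms, of x, symmetric] by simp
qed

lemma tinner_onb:
  assumes "onb X B"
  shows "tinner Z X = (\<Sum>b\<in>B. (b \<bullet> (X *v b)) * (b \<bullet> (Z *v b)))"
proof -
  have "tinner Z X = tinner Z (\<Sum>b\<in>B. (b \<bullet> (X *v b)) *\<^sub>R outer b b)"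
    using onb_decomp[OF assms] by simp
  also have "\<dots> = (\<Sum>b\<in>B. (b \<bullet> (X *v b)) * (b \<bullet> (Z *v b)))"
    by (simp add: tinner_sum_right tinner_scale_right tinner_outer)
  finally show ?thesis .
qed

lemma trace_onb:
  assumes "onb X B"
  shows "trace Z = (\<Sum>b\<in>B. b \<bullet> (Z *v b))"
proof -
  have "trace Z = tinner Z (mat 1)" by (simp add: tinner_mat1)
  also have "\<dots> = tinner Z (\<Sum>b\<in>B. outer b b)" using onb_id[OF assms] by simp
  also have "\<dots> = (\<Sum>b\<in>B. b \<bullet> (Z *v b))" by (simp add: tinner_sum_right tinner_outer)
  finally show ?thesis .
qed

lemma tinner_psd_nonneg:
  assumes "psd Z" "psd X" "symm X"
  shows "0 \<le> tinner Z X"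
proof -
  obtain B where B: "onb X B" using spectral[OF assms(3)] by (elim exE)
  have "0 \<le> (\<Sum>b\<in>B. (b \<bullet> (X *v b)) * (b \<bullet> (Z *v b)))"
  proof (rule sum_nonneg)
    fix b assume "b \<in> B"
    have "0 \<le> b \<bullet> (X *v b)" using assms(2) by (simp add: psd_def)
    moreover have "0 \<le> b \<bullet> (Z *v b)" using assms(1) by (simp add: psd_def)
    ultimately show "0 \<le> (b \<bullet> (X *v b)) * (b \<bullet> (Z *v b))" by (rule mult_nonneg_nonneg)
  qed
  thus ?thesis using tinner_onb[OF B] by simp
qed

lemma trace_psd_nonneg:
  assumes "psd Z"
  shows "0 \<le> trace Z"
  using tinner_psd_nonneg[OF assms, of "mat 1"] 
  by (simp add: tinner_mat1 psd_def symm_mat)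

definition eigs :: "real^'n^'n \<Rightarrow> real set" where
  "eigs M = {l. \<exists>v. v \<noteq> 0 \<and> M *v v = l *\<^sub>R v}"

lemma lambda_max_eigs: "lambda_max M = Max (eigs M)"
  by (simp add: lambda_max_def eigs_def)

lemma onb_nonempty:
  assumes "onb (M::real^'n^'n) B" shows "B \<noteq> {}"
proof
  assume "B = {}"
  hence "(\<Sum>b\<in>B. (b \<bullet> vec 1) *\<^sub>R b) = (0::real^'n)" by simp
  hence "(vec 1 :: real^'n) = 0" using onb_parts(5)[OF assms, of "vec 1"] by (rule trans[rotated])
  thus False by (simp add: vec_eq_iff)
qed

lemma onb_eig_in:
  assumes "onb M B" "b \<in> B" shows "b \<bullet> (M *v b) \<in> eigs M"
proof -
  have "norm b = 1" using onb_parts(2)[OF assms(1)] assms(2) by (rule bspec)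
  hence "b \<noteq> 0" by auto
  moreover have "M *v b = (b \<bullet> (M *v b)) *\<^sub>R b" by (rule onb_parts(4)[OF assms])
  ultimately show ?thesis unfolding eigs_def by (intro CollectI exI conjI)
qed

lemma onb_eigs_sub:
  assumes "onb M B" "symm M"
  shows "eigs M \<subseteq> (\<lambda>b. b \<bullet> (M *v b)) ` B"
proof
  fix l assume "l \<in> eigs M"
  then obtain v where v: "v \<noteq> 0" "M *v v = l *\<^sub>R v" unfolding eigs_def by (elim CollectE exE conjE)
  have "\<exists>b\<in>B. b \<bullet> v \<noteq> 0"
  proof (rule ccontr)
    assume "\<not> ?thesis"
    hence "(\<Sum>b\<in>B. (b \<bullet> v) *\<^sub>R b) = 0" by (intro sum.neutral) auto
    hence "v = 0" using onb_parts(5)[OF assms(1), of v] by (rule trans[rotated])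
    thus False using v(1) by (rule notE[rotated])
  qed
  then obtain b where b: "b \<in> B" "b \<bullet> v \<noteq> 0" by (elim bexE)
  have "b \<bullet> (M *v v) = l * (b \<bullet> v)" using v(2) by simp
  moreover have "b \<bullet> (M *v v) = (M *v b) \<bullet> v" by (rule symm_inner[OF assms(2)])
  moreover have "M *v b = (b \<bullet> (M *v b)) *\<^sub>R b" by (rule onb_parts(4)[OF assms(1) b(1)])
  ultimately have "l * (b \<bullet> v) = (b \<bullet> (M *v b)) * (b \<bullet> v)" by (metis inner_scaleR_left)
  hence "l = b \<bullet> (M *v b)" using b(2) by simp
  thus "l \<in> (\<lambda>b. b \<bullet> (M *v b)) ` B" using b(1) by (rule image_eqI)
qed

lemma eigs_finite_ne:
  assumes "symm M" shows "finite (eigs M)" "eigs M \<noteq> {}"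
proof -
  obtain B where B: "onb M B" using spectral[OF assms] by (elim exE)
  show "finite (eigs M)"
    by (rule finite_subset[OF onb_eigs_sub[OF B assms]]) (simp add: onb_parts(1)[OF B])
  obtain b where "b \<in> B" using onb_nonempty[OF B] by (metis ex_in_conv)
  thus "eigs M \<noteq> {}" using onb_eig_in[OF B] by (metis empty_iff)
qed

lemma lambda_max_eig:
  assumes "symm M" shows "\<exists>v. v \<noteq> 0 \<and> M *v v = lambda_max M *\<^sub>R v"
proof -
  have "lambda_max M \<in> eigs M" unfolding lambda_max_eigs
    by (rule Max_in[OF eigs_finite_ne[OF assms]])
  thus ?thesis unfolding eigs_def by (elim CollectE)
qed

lemma rayleigh:
  assumes "symm M"
  shows "v \<bullet> (M *v v) \<le> lambda_max M * (v \<bullet> v)"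
proof -
  obtain B where B: "onb M B" using spectral[OF assms] by (elim exE)
  let ?L = "lambda_max M"
  have le: "b \<bullet> (M *v b) \<le> ?L" if "b \<in> B" for b
    unfolding lambda_max_eigs
    by (rule Max_ge[OF eigs_finite_ne(1)[OF assms] onb_eig_in[OF B that]])
  have "v \<bullet> (M *v v) = (\<Sum>b\<in>B. ((b \<bullet> (M *v b)) * (b \<bullet> v)) * (v \<bullet> b))"
    using onb_mult[OF B, of v] by (simp add: inner_sum_right)
  also have "\<dots> \<le> (\<Sum>b\<in>B. (?L * (b \<bullet> v)) * (v \<bullet> b))"
  proof (rule sum_mono)
    fix b assume bB: "b \<in> B"
    have "(b \<bullet> v) * (v \<bullet> b) \<ge> 0" by (simp add: inner_commute)
    hence "(b \<bullet> (M *v b)) * ((b \<bullet> v) * (v \<bullet> b)) \<le> ?L * ((b \<bullet> v) * (v \<bullet> b))"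
      using le[OF bB] by (rule mult_right_mono[rotated])
    thus "((b \<bullet> (M *v b)) * (b \<bullet> v)) * (v \<bullet> b) \<le> (?L * (b \<bullet> v)) * (v \<bullet> b)"
      by (simp add: mult.assoc)
  qed
  also have "\<dots> = ?L * (v \<bullet> (\<Sum>b\<in>B. (b \<bullet> v) *\<^sub>R b))"
    by (simp add: inner_sum_right sum_distrib_left mult.assoc)
  also have "\<dots> = ?L * (v \<bullet> v)" using onb_parts(5)[OF B, of v, symmetric] by simp
  finally show ?thesis .
qed



lemma opA_add: "opA A (X + Y) = opA A X + opA A Y"
  by (simp add: opA_def vec_eq_iff tinner_add_right)
lemma opA_scale: "opA A (c *\<^sub>R X) = c *\<^sub>R opA A X"
  by (simp add: opA_def vec_eq_iff tinner_scale_right)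
lemma opA_zero: "opA A 0 = 0"
  using opA_scale[of A 0 0] by simp
lemma adjA_scale: "adjA A (c *\<^sub>R y) = c *\<^sub>R adjA A y"
  by (simp add: adjA_def scaleR_sum_right)

lemma adjA_neg: "adjA A (- y) = - adjA A y"
  using adjA_scale[of A "-1" y] by simp

lemma pd_psd: "pd X \<Longrightarrow> psd X"
  unfolding pd_def psd_def
proof (intro allI)
  fix v assume h: "\<forall>v. v \<noteq> 0 \<longrightarrow> 0 < v \<bullet> (X *v v)"
  show "0 \<le> v \<bullet> (X *v v)"
  proof (cases "v = 0")
    case True thus ?thesis by simp
  next
    case False thus ?thesis using h by (simp add: less_imp_le)
  qed
qed

lemma psd_test:
  assumes "\<And>X. symm X \<Longrightarrow> psd X \<Longrightarrow> 0 \<le> tinner M X"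
  shows "psd M"
  unfolding psd_def
proof
  fix v
  have "0 \<le> tinner M (outer v v)" by (rule assms[OF symm_outer psd_outer])
  thus "0 \<le> v \<bullet> (M *v v)" by (simp add: tinner_outer)
qed

lemma weak_duality:
  assumes "primal_feasible A b X" "dual_feasible C A y Z"
  shows "b \<bullet> y \<le> tinner C X"
proof -
  have X: "symm X" "opA A X = b" "psd X" using assms(1) by (simp_all add: primal_feasible_def)
  have Z: "symm Z" "Z + adjA A y = C" "psd Z" using assms(2) by (simp_all add: dual_feasible_def)
  have "tinner C X = tinner Z X + tinner (adjA A y) X" using Z(2)[symmetric] by (simp add: tinner_add_left)
  also have "tinner (adjA A y) X = y \<bullet> b" using X(2) opA_inner[of y A X] by simp
  finally have "tinner C X = tinner Z X + b \<bullet> y" by (simp add: inner_commute)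
  moreover have "0 \<le> tinner Z X" by (rule tinner_psd_nonneg[OF Z(3) X(3) X(1)])
  ultimately show ?thesis by linarith
qed

lemma psd_zero:
  assumes M: "symm M" "psd M" and X0: "pd X0" and z: "tinner M X0 = 0"
  shows "M = 0"
proof -
  obtain B where B: "onb M B" using spectral[OF M(1)] by (elim exE)
  have fin: "finite B" by (rule onb_parts(1)[OF B])
  have eq: "tinner X0 M = (\<Sum>b\<in>B. (b \<bullet> (M *v b)) * (b \<bullet> (X0 *v b)))" by (rule tinner_onb[OF B])
  have nn: "\<forall>b\<in>B. 0 \<le> (b \<bullet> (M *v b)) * (b \<bullet> (X0 *v b))"
  proof
    fix b assume "b \<in> B"
    have "0 \<le> b \<bullet> (M *v b)" using M(2) by (simp add: psd_def)
    moreover have "0 \<le> b \<bullet> (X0 *v b)" using pd_psd[OF X0] by (simp add: psd_def)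
    ultimately show "0 \<le> (b \<bullet> (M *v b)) * (b \<bullet> (X0 *v b))" by (rule mult_nonneg_nonneg)
  qed
  have "(\<Sum>b\<in>B. (b \<bullet> (M *v b)) * (b \<bullet> (X0 *v b))) = 0" using z eq tinner_comm[of M X0] by simp
  hence each: "\<forall>b\<in>B. (b \<bullet> (M *v b)) * (b \<bullet> (X0 *v b)) = 0"
    using sum_nonneg_eq_0_iff[OF fin, of "\<lambda>b. (b \<bullet> (M *v b)) * (b \<bullet> (X0 *v b))"] nn by (simp only: ball_simps)
  have "\<forall>b\<in>B. b \<bullet> (M *v b) = 0"
  proof
    fix b assume bB: "b \<in> B"
    have "norm b = 1" using onb_parts(2)[OF B] bB by (rule bspec)
    hence "b \<noteq> 0" by auto
    hence "0 < b \<bullet> (X0 *v b)" using X0 by (simp add: pd_def)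
    moreover have "(b \<bullet> (M *v b)) * (b \<bullet> (X0 *v b)) = 0" using each bB by (rule bspec)
    ultimately show "b \<bullet> (M *v b) = 0" by simp
  qed
  hence "(\<Sum>b\<in>B. (b \<bullet> (M *v b)) *\<^sub>R outer b b) = 0" by (intro sum.neutral) simp
  thus ?thesis using onb_decomp[OF B] by (rule trans[rotated])
qed

lemma real_ray:
  fixes c d :: real
  assumes "\<And>t. t > 0 \<Longrightarrow> 0 \<le> c + d * t"
  shows "0 \<le> c \<and> 0 \<le> d"
proof
  show "0 \<le> d"
  proof (rule ccontr)
    assume "\<not> 0 \<le> d"
    hence d: "d < 0" by simp
    define t where "t = (\<bar>c\<bar> + 1) / (- d)"
    have t: "t > 0" using d unfolding t_def by (intro divide_pos_pos) auto
    have "d * t = - (\<bar>c\<bar> + 1)" using d by (simp add: t_def)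
    thus False using assms[OF t] by linarith
  qed
  show "0 \<le> c"
  proof (rule ccontr)
    assume "\<not> 0 \<le> c"
    hence c: "c < 0" by simp
    define t where "t = (- c) / (2 * (\<bar>d\<bar> + 1))"
    have t: "t > 0" using c unfolding t_def by (intro divide_pos_pos) (auto simp: add_pos_nonneg)
    have "d * t \<le> \<bar>d\<bar> * t" using t by (simp add: mult_right_mono)
    also have "\<bar>d\<bar> * t = (- c) * (\<bar>d\<bar> / (2 * (\<bar>d\<bar> + 1)))" by (simp add: t_def)
    also have "\<dots> \<le> (- c) * (1/2)"
    proof (rule mult_left_mono)
      show "\<bar>d\<bar> / (2 * (\<bar>d\<bar> + 1)) \<le> 1/2" by (simp add: field_simps)
    qed (use c in simp)
    finally have "d * t \<le> - c / 2" by simp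
    thus False using assms[OF t] c by linarith
  qed
qed



lemma strong_duality:
  fixes C :: "real^'n^'n" and A :: "'m::finite \<Rightarrow> real^'n^'n" and b :: "real^'m"
  assumes symC: "symm C" and symA: "\<And>i. symm (A i)"
    and indep: "\<forall>y. (\<Sum>i\<in>UNIV. (y $ i) *\<^sub>R A i) = 0 \<longrightarrow> y = 0"
    and X0: "symm X0" "opA A X0 = b" "pd X0"
    and D0: "dual_feasible C A y0 Z0"
    and P_def: "P = {tinner C X | X. primal_feasible A b X}"
  shows "P \<noteq> {}" "bdd_below P" "\<exists>y Z. dual_feasible C A y Z \<and> b \<bullet> y = Inf P"
proof -
  have X0f: "primal_feasible A b X0" using X0 pd_psd[OF X0(3)] by (simp add: primal_feasible_def)
  show Pne: "P \<noteq> {}" using X0f unfolding P_def by blast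
  have lb: "b \<bullet> y0 \<le> r" if "r \<in> P" for r
    using that weak_duality[OF _ D0] unfolding P_def by blast
  show bdd: "bdd_below P" using lb by (intro bdd_belowI)
  define p where "p = Inf P"
  have p_le: "p \<le> tinner C X" if "primal_feasible A b X" for X
    unfolding p_def using bdd that unfolding P_def by (intro cInf_lower) blast+
  define K where "K = {(X::real^'n^'n, t). symm X \<and> psd X \<and> (0::real) < t}"
  define f where "f = (\<lambda>(X, t). (opA A X - b, tinner C X - p + t))"
  define S where "S = f ` K"
  have convK: "convex S"
    unfolding convex_def S_def
  proof (intro ballI allI impI)
    fix x y u v :: real
    fix z1 z2 assume z1: "z1 \<in> f ` K" and z2: "z2 \<in> f ` K" and uv: "0 \<le> u" "0 \<le> v" "u + v = 1"
    then obtain X1 t1 X2 t2 where k1: "(X1, t1) \<in> K" and e1: "z1 = f (X1, t1)"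
      and k2: "(X2, t2) \<in> K" and e2: "z2 = f (X2, t2)" by auto
    have h1: "symm X1" "psd X1" "0 < t1" using k1 by (auto simp: K_def)
    have h2: "symm X2" "psd X2" "0 < t2" using k2 by (auto simp: K_def)
    define X where "X = u *\<^sub>R X1 + v *\<^sub>R X2"
    define t where "t = u * t1 + v * t2"
    have "symm X" unfolding X_def by (intro symm_add symm_scale h1 h2)
    moreover have "psd X" unfolding psd_def
    proof
      fix w
      have "w \<bullet> (X *v w) = u * (w \<bullet> (X1 *v w)) + v * (w \<bullet> (X2 *v w))"
        by (simp add: X_def matrix_vector_mult_add_rdistrib scaleR_matrix_vector_assoc[symmetric] inner_add_right)
      moreover have "0 \<le> w \<bullet> (X1 *v w)" "0 \<le> w \<bullet> (X2 *v w)" using h1 h2 by (auto simp: psd_def)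
      ultimately show "0 \<le> w \<bullet> (X *v w)" using uv by simp
    qed
    moreover have "0 < t"
    proof (cases "u = 0")
      case True thus ?thesis using uv h2 by (simp add: t_def)
    next
      case False
      hence "0 < u * t1" using uv h1 by simp
      moreover have "0 \<le> v * t2" using uv h2 by simp
      ultimately show ?thesis by (simp add: t_def)
    qed
    ultimately have "(X, t) \<in> K" by (simp add: K_def)
    moreover have "u *\<^sub>R z1 + v *\<^sub>R z2 = f (X, t)"
    proof -
      have bb: "b = u *\<^sub>R b + v *\<^sub>R b" using uv by (metis scaleR_add_left scaleR_one)
      have pp: "p = u * p + v * p" using uv by (metis distrib_right mult_1)
      have "opA A X - b = u *\<^sub>R (opA A X1 - b) + v *\<^sub>R (opA A X2 - b)"
        by (subst bb) (simp add: X_def opA_add opA_scale algebra_simps)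
      moreover have "tinner C X - p + t = u * (tinner C X1 - p + t1) + v * (tinner C X2 - p + t2)"
        by (subst pp) (simp add: X_def t_def tinner_add_right tinner_scale_right algebra_simps)
      ultimately show ?thesis by (simp add: e1 e2 f_def)
    qed
    ultimately show "u *\<^sub>R z1 + v *\<^sub>R z2 \<in> f ` K" by (rule rev_image_eqI)
  qed
  have notin: "0 \<notin> S"
  proof
    assume "0 \<in> S"
    then obtain X t where k: "(X, t) \<in> K" and e: "0 = f (X, t)" unfolding S_def by auto
    have h: "symm X" "psd X" "0 < t" using k by (auto simp: K_def)
    have e1: "opA A X = b" and e2: "tinner C X = p - t" using e by (simp_all add: f_def zero_prod_def)
    have "primal_feasible A b X" using h e1 by (simp add: primal_feasible_def)
    hence "p \<le> tinner C X" by (rule p_le)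
    thus False using e2 h(3) by simp
  qed
  obtain w where w: "w \<noteq> 0" "\<forall>x\<in>S. 0 \<le> w \<bullet> x"
    using separating_hyperplane_set_0[OF convK notin] by (elim exE conjE)
  obtain a a0 where wa: "w = (a, a0)" by (cases w)
  define N where "N = adjA A a + a0 *\<^sub>R C"
  define Kc where "Kc = - (a \<bullet> b) - a0 * p"
  have key: "0 \<le> tinner N X + Kc + a0 * t" if "symm X" "psd X" "0 < t" for X t
  proof -
    have "(X, t) \<in> K" using that by (simp add: K_def)
    hence "f (X, t) \<in> S" unfolding S_def by (rule imageI)
    hence "0 \<le> w \<bullet> f (X, t)" using w(2) by (rule bspec[rotated])
    moreover have "w \<bullet> f (X, t) = tinner N X + Kc + a0 * t"
      by (simp add: wa f_def N_def Kc_def inner_diff_right tinner_add_left tinner_scale_left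
          opA_inner[symmetric] algebra_simps)
    ultimately show ?thesis by simp
  qed
  have psd0: "psd (0::real^'n^'n)" by (simp add: psd_def)
  have symm0: "symm (0::real^'n^'n)" by (simp add: symm_def transpose_def vec_eq_iff)
  have "0 \<le> Kc \<and> 0 \<le> a0"
  proof (rule real_ray)
    fix t :: real assume "0 < t"
    from key[OF symm0 psd0 this] show "0 \<le> Kc + a0 * t" by (simp add: tinner_expand)
  qed
  hence Kc0: "0 \<le> Kc" and a00: "0 \<le> a0" by auto
  have qpos: "0 \<le> tinner N X" if X: "symm X" "psd X" for X
  proof -
    have "0 \<le> Kc + a0 \<and> 0 \<le> tinner N X"
    proof (rule real_ray)
      fix s :: real assume s: "0 < s"
      have "symm (s *\<^sub>R X)" using X by (simp add: symm_scale)
      moreover have "psd (s *\<^sub>R X)" using X s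
        by (simp add: psd_def scaleR_matrix_vector_assoc[symmetric])
      ultimately have "0 \<le> tinner N (s *\<^sub>R X) + Kc + a0 * 1" by (rule key) simp
      thus "0 \<le> Kc + a0 + tinner N X * s" by (simp add: tinner_scale_right algebra_simps)
    qed
    thus ?thesis by simp
  qed
  have symN: "symm N" unfolding N_def by (intro symm_add symm_scale symm_adjA symA symC)
  have psdN: "psd N" by (rule psd_test[OF qpos])
  show "\<exists>y Z. dual_feasible C A y Z \<and> b \<bullet> y = Inf P"
  proof (cases "a0 = 0")
    case True
    hence N: "N = adjA A a" by (simp add: N_def)
    have "tinner N X0 = a \<bullet> b" using X0(2) opA_inner[of a A X0] N by simp
    moreover have "0 \<le> tinner N X0" by (rule qpos[OF X0(1) pd_psd[OF X0(3)]])
    moreover have "a \<bullet> b \<le> 0" using Kc0 True by (simp add: Kc_def)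
    ultimately have "tinner N X0 = 0" by simp
    hence "N = 0" by (rule psd_zero[OF symN psdN X0(3)])
    hence "a = 0" using indep N by (simp add: adjA_def)
    hence "w = 0" using wa True by (simp add: zero_prod_def)
    thus ?thesis using w(1) by simp
  next
    case False
    hence a0p: "0 < a0" using a00 by simp
    define y where "y = (- (1/a0)) *\<^sub>R a"
    define Z where "Z = C - adjA A y"
    have Zeq: "Z = (1/a0) *\<^sub>R N"
      using a0p by (simp add: Z_def y_def N_def adjA_scale adjA_neg algebra_simps)
    have "symm Z" unfolding Zeq by (rule symm_scale[OF symN])
    moreover have "psd Z" unfolding Zeq using psdN a0p
      by (simp add: psd_def scaleR_matrix_vector_assoc[symmetric])
    moreover have "Z + adjA A y = C" by (simp add: Z_def)
    ultimately have df: "dual_feasible C A y Z" by (simp add: dual_feasible_def)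
    have "b \<bullet> y = - (a \<bullet> b) / a0" by (simp add: y_def inner_commute)
    moreover have "a0 * p \<le> - (a \<bullet> b)" using Kc0 by (simp add: Kc_def)
    moreover have "p * a0 \<le> - (a \<bullet> b)" using calculation(2) by (simp add: mult.commute)
    hence "p \<le> - (a \<bullet> b) / a0" by (rule pos_le_divide_eq[OF a0p, THEN iffD2])
    ultimately have ge: "p \<le> b \<bullet> y" by simp
    have le: "b \<bullet> y \<le> p"
      unfolding p_def
    proof (rule cInf_greatest[OF Pne])
      fix r assume "r \<in> P"
      then obtain X where "primal_feasible A b X" "r = tinner C X" unfolding P_def by blast
      thus "b \<bullet> y \<le> r" using weak_duality[OF _ df] by simp
    qed
    have "b \<bullet> y = Inf P" using ge le p_def by simp
    thus ?thesis using df by blast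
  qed
qed



lemma mvneg: "(- X) *v v = - (X *v (v::real^'n))" for X :: "real^'n^'n"
  by (simp add: matrix_vector_mult_def vec_eq_iff sum_negf)

lemma psd_t0:
  assumes "symm X" "psd X" shows "max (lambda_max (- X)) 0 = 0"
proof -
  obtain v where v: "v \<noteq> 0" "(- X) *v v = lambda_max (- X) *\<^sub>R v"
    using lambda_max_eig[OF symm_neg[OF assms(1)]] by (elim exE conjE)
  have "v \<bullet> ((- X) *v v) = lambda_max (- X) * (v \<bullet> v)" using v(2) by simp
  moreover have "v \<bullet> ((- X) *v v) = - (v \<bullet> (X *v v))"
    by (simp add: mvneg)
  moreover have "0 \<le> v \<bullet> (X *v v)" using assms(2) by (simp add: psd_def)
  moreover have "0 < v \<bullet> v" using v(1) by simp
  ultimately have "lambda_max (- X) \<le> 0"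
    by (metis mult_le_0_iff neg_le_0_iff_le not_less)
  thus ?thesis by simp
qed

lemma t0_psd:
  assumes "symm X" "max (lambda_max (- X)) 0 = 0" shows "psd X"
  unfolding psd_def
proof
  fix v
  have "v \<bullet> ((- X) *v v) \<le> lambda_max (- X) * (v \<bullet> v)" by (rule rayleigh[OF symm_neg[OF assms(1)]])
  moreover have "lambda_max (- X) \<le> 0" using assms(2) by (metis max.cobounded1)
  moreover have "0 \<le> v \<bullet> v" by simp
  ultimately have "v \<bullet> ((- X) *v v) \<le> 0" by (metis mult_nonpos_nonneg order_trans)
  moreover have "v \<bullet> ((- X) *v v) = - (v \<bullet> (X *v v))"
    by (simp add: mvneg)
  ultimately show "0 \<le> v \<bullet> (X *v v)" by simp
qed

lemma shift_psd:
  assumes "symm X" shows "psd (X + max (lambda_max (- X)) 0 *\<^sub>R mat 1)"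
  unfolding psd_def
proof
  fix v
  let ?t = "max (lambda_max (- X)) 0"
  have "v \<bullet> ((- X) *v v) \<le> lambda_max (- X) * (v \<bullet> v)" by (rule rayleigh[OF symm_neg[OF assms(1)]])
  also have "\<dots> \<le> ?t * (v \<bullet> v)" by (rule mult_right_mono) simp_all
  finally have h: "v \<bullet> ((- X) *v v) \<le> ?t * (v \<bullet> v)" .
  have "v \<bullet> ((- X) *v v) = - (v \<bullet> (X *v v))"
    by (simp add: mvneg)
  moreover have "v \<bullet> ((X + ?t *\<^sub>R mat 1) *v v) = v \<bullet> (X *v v) + ?t * (v \<bullet> v)"
    by (simp add: matrix_vector_mult_add_rdistrib scaleR_matrix_vector_assoc[symmetric] inner_add_right)
  ultimately show "0 \<le> v \<bullet> ((X + ?t *\<^sub>R mat 1) *v v)" using h by simp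
qed

theorem proposition3p1:
  fixes C :: "real^'n::finite^'n" and A :: "'m::finite \<Rightarrow> real^'n^'n"
    and b :: "real^'m" and \<rho> :: real and Xh :: "real^'n^'n"
  assumes symC: "symm C" and symA: "\<And>i. symm (A i)"
    and indep: "\<And>y. (\<Sum>i\<in>UNIV. (y $ i) *\<^sub>R A i) = 0 \<Longrightarrow> y = 0"
    and strict_primal: "\<exists>X. symm X \<and> opA A X = b \<and> pd X"
    and strict_dual: "\<exists>y Z. symm Z \<and> Z + adjA A y = C \<and> pd Z"
    and rho: "\<rho> > DZstar C A b"
    and symX: "symm Xh"
  shows "Xh \<in> primal_opt C A b \<longleftrightarrow> Xh \<in> penalized_opt C A b \<rho>"
proof -
  obtain X0 where X0: "symm X0" "opA A X0 = b" "pd X0" using strict_primal by (elim exE conjE)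
  obtain y0 Z0 where Z0: "symm Z0" "Z0 + adjA A y0 = C" "pd Z0" using strict_dual by (elim exE conjE)
  have D0: "dual_feasible C A y0 Z0" using Z0 pd_psd[OF Z0(3)] by (simp add: dual_feasible_def)
  define P where "P = {tinner C X | X. primal_feasible A b X}"
  have indep': "\<forall>y. (\<Sum>i\<in>UNIV. (y $ i) *\<^sub>R A i) = 0 \<longrightarrow> y = 0" using indep by blast
  note SD = strong_duality[OF symC symA indep' X0 D0 P_def]
  obtain ys Zs where df: "dual_feasible C A ys Zs" and bys: "b \<bullet> ys = Inf P"
    using SD(3) by (elim exE conjE)
  define p where "p = Inf P"
  have p_le: "p \<le> tinner C X" if "primal_feasible A b X" for X
    unfolding p_def using SD(2) that unfolding P_def by (intro cInf_lower) blast+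
  have p_ge: "c \<le> p" if "\<And>X. primal_feasible A b X \<Longrightarrow> c \<le> tinner C X" for c
    unfolding p_def
  proof (rule cInf_greatest[OF SD(1)])
    fix r assume "r \<in> P"
    then obtain X where "primal_feasible A b X" "r = tinner C X" unfolding P_def by blast
    thus "c \<le> r" using that by simp
  qed
  have Zs: "symm Zs" "Zs + adjA A ys = C" "psd Zs" using df by (simp_all add: dual_feasible_def)
  have ys_opt: "(ys, Zs) \<in> dual_opt C A b"
  proof -
    have "b \<bullet> y' \<le> b \<bullet> ys" if "dual_feasible C A y' Z'" for y' Z'
    proof -
      have "b \<bullet> y' \<le> p" by (rule p_ge) (rule weak_duality[OF _ that])
      thus ?thesis using bys p_def by simp
    qed
    thus ?thesis using df unfolding dual_opt_def by blast
  qed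
  obtain B0 where B0: "onb X0 B0" using spectral[OF X0(1)] by (elim exE)
  define \<mu> where "\<mu> = Min ((\<lambda>b. b \<bullet> (X0 *v b)) ` B0)"
  have finB0: "finite B0" by (rule onb_parts(1)[OF B0])
  have neB0: "B0 \<noteq> {}" by (rule onb_nonempty[OF B0])
  have mu_pos: "0 < \<mu>"
  proof -
    have "\<mu> \<in> (\<lambda>b. b \<bullet> (X0 *v b)) ` B0" unfolding \<mu>_def
      by (rule Min_in) (use finB0 neB0 in auto)
    then obtain c where c: "c \<in> B0" "\<mu> = c \<bullet> (X0 *v c)" by (elim imageE)
    have "norm c = 1" using onb_parts(2)[OF B0] c(1) by (rule bspec)
    hence "c \<noteq> 0" by auto
    thus ?thesis using X0(3) c(2) by (simp add: pd_def)
  qed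
  have mu_le: "\<mu> \<le> c \<bullet> (X0 *v c)" if "c \<in> B0" for c
    unfolding \<mu>_def by (rule Min_le) (use finB0 that in auto)
  have trbound: "\<mu> * trace Z \<le> tinner Z X0" if "psd Z" for Z
  proof -
    have "\<mu> * trace Z = (\<Sum>c\<in>B0. \<mu> * (c \<bullet> (Z *v c)))"
      by (simp add: trace_onb[OF B0] sum_distrib_left)
    also have "\<dots> \<le> (\<Sum>c\<in>B0. (c \<bullet> (X0 *v c)) * (c \<bullet> (Z *v c)))"
    proof (rule sum_mono)
      fix c assume "c \<in> B0"
      have "0 \<le> c \<bullet> (Z *v c)" using that by (simp add: psd_def)
      thus "\<mu> * (c \<bullet> (Z *v c)) \<le> (c \<bullet> (X0 *v c)) * (c \<bullet> (Z *v c))"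
        using mu_le[OF \<open>c \<in> B0\<close>] by (rule mult_right_mono[rotated])
    qed
    also have "\<dots> = tinner Z X0" by (rule tinner_onb[OF B0, symmetric])
    finally show ?thesis .
  qed
  have split: "tinner C X = tinner Z X + b \<bullet> y" if "Z + adjA A y = C" "opA A X = b" for X Z y
  proof -
    have "tinner C X = tinner Z X + tinner (adjA A y) X" using that(1)[symmetric] by (simp add: tinner_add_left)
    also have "tinner (adjA A y) X = y \<bullet> b" using that(2) opA_inner[of y A X] by simp
    finally show ?thesis by (simp add: inner_commute)
  qed
  have bdd: "bdd_above ((\<lambda>(y, Z). trace Z) ` dual_opt C A b)"
  proof (rule bdd_aboveI)
    fix r assume "r \<in> (\<lambda>(y, Z). trace Z) ` dual_opt C A b"
    then obtain y Z where yZ: "(y, Z) \<in> dual_opt C A b" and r: "r = trace Z" by auto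
    have fy: "dual_feasible C A y Z" and opt: "b \<bullet> ys \<le> b \<bullet> y"
      using yZ df unfolding dual_opt_def by auto
    have Zp: "psd Z" "Z + adjA A y = C" using fy by (simp_all add: dual_feasible_def)
    have "tinner C X0 = tinner Z X0 + b \<bullet> y" by (rule split[OF Zp(2) X0(2)])
    hence "\<mu> * trace Z \<le> tinner C X0 - p" using trbound[OF Zp(1)] opt bys p_def by simp
    hence "trace Z \<le> (tinner C X0 - p) / \<mu>" using mu_pos by (simp add: pos_le_divide_eq mult.commute)
    thus "r \<le> (tinner C X0 - p) / \<mu>" using r by simp
  qed
  have "trace Zs \<le> DZstar C A b" unfolding DZstar_def
    by (rule cSup_upper[OF _ bdd]) (use ys_opt in force)
  hence gap: "0 < \<rho> - trace Zs" using rho by simp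
  have lower: "p + (\<rho> - trace Zs) * max (lambda_max (- X)) 0 \<le> penalty_obj C \<rho> X"
    if X: "symm X" "opA A X = b" for X
  proof -
    let ?t = "max (lambda_max (- X)) 0"
    have sy: "symm (X + ?t *\<^sub>R mat 1)" by (intro symm_add symm_scale symm_mat X(1))
    have "0 \<le> tinner Zs (X + ?t *\<^sub>R mat 1)"
      by (rule tinner_psd_nonneg[OF Zs(3) shift_psd[OF X(1)] sy])
    hence "0 \<le> tinner Zs X + ?t * trace Zs"
      by (simp add: tinner_add_right tinner_scale_right tinner_mat1)
    moreover have "tinner C X = tinner Zs X + p" using split[OF Zs(2) X(2)] bys p_def by simp
    ultimately show ?thesis unfolding penalty_obj_def by (simp add: algebra_simps)
  qed
  have lower': "p \<le> penalty_obj C \<rho> X" if X: "symm X" "opA A X = b" for X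
  proof -
    have "0 \<le> (\<rho> - trace Zs) * max (lambda_max (- X)) 0" using gap by simp
    thus ?thesis using lower[OF X] by linarith
  qed
  have feas_pen: "penalty_obj C \<rho> X = tinner C X" if "primal_feasible A b X" for X
    using psd_t0[of X] that by (simp add: primal_feasible_def penalty_obj_def)
  show ?thesis
  proof
    assume "Xh \<in> primal_opt C A b"
    hence f: "primal_feasible A b Xh" and o: "\<And>X'. primal_feasible A b X' \<Longrightarrow> tinner C Xh \<le> tinner C X'"
      unfolding primal_opt_def by auto
    have "tinner C Xh \<le> p" by (rule p_ge) (rule o)
    hence "penalty_obj C \<rho> Xh \<le> p" using feas_pen[OF f] by simp
    hence "penalty_obj C \<rho> Xh \<le> penalty_obj C \<rho> X'" if "symm X' \<and> opA A X' = b" for X'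
      using lower'[of X'] that by simp
    thus "Xh \<in> penalized_opt C A b \<rho>" using f unfolding penalized_opt_def primal_feasible_def by auto
  next
    assume "Xh \<in> penalized_opt C A b \<rho>"
    hence hb: "opA A Xh = b" and o: "\<And>X'. symm X' \<Longrightarrow> opA A X' = b \<Longrightarrow> penalty_obj C \<rho> Xh \<le> penalty_obj C \<rho> X'"
      unfolding penalized_opt_def by auto
    have po: "penalty_obj C \<rho> Xh \<le> tinner C X'" if "primal_feasible A b X'" for X'
      using o[of X'] feas_pen[OF that] that by (simp add: primal_feasible_def)
    have "penalty_obj C \<rho> Xh \<le> p" by (rule p_ge) (rule po)
    hence "(\<rho> - trace Zs) * max (lambda_max (- Xh)) 0 \<le> 0" using lower[OF symX hb] by linarith
    hence "max (lambda_max (- Xh)) 0 \<le> 0" using gap by (simp add: mult_le_0_iff)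
    hence t0: "max (lambda_max (- Xh)) 0 = 0" by (simp add: max_def split: if_splits)
    have psdX: "psd Xh" by (rule t0_psd[OF symX t0])
    have fX: "primal_feasible A b Xh" using symX hb psdX by (simp add: primal_feasible_def)
    have "tinner C Xh \<le> tinner C X'" if "primal_feasible A b X'" for X'
      using po[OF that] feas_pen[OF fX] by simp
    thus "Xh \<in> primal_opt C A b" using fX unfolding primal_opt_def by auto
  qed
qed

end
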